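(* Let $A$ be a generalized ring and $a\in A_{[1]}$. Then the basic open set $D_a=\{\mathfrak p\in spec(A): a\notin\mathfrak p\}$ is compact (every cover by open subsets of $spec(A)$ has a finite subcover). In particular $spec(A)=D_1$ is compact.
   Context: All sets $X,Y,Z,W$ below are finite. A partial map $f:X\rightharpoonup Y$ is a map $f:D(f)\to Y$ defined on a subset $D(f)\subseteq X$; $Set_\bullet(X,Y)$ is the set of partial maps. $\mathbb F_\bullet$ is the category of finite sets with partial bijections; $f^t$ is the inverse. $[1]=\{1\}$, $c_X:X\to[1]$ the total map. A generalized ring $A$ consists of: a functor $X\mapsto A_X$ from $\mathbb F_\bullet$ to pointed sets with $A_\emptyset=\{0\}$; $A_f=\prod_{y\in Y}A_{f^{-1}(y)}$ for $f\in Set_\bullet(X,Y)$ (so $A_{c_X}=A_X$, $A_{id_X}=(A_{[1]})^X$); multiplications $\circ:A_Y\times A_f\to A_X$ and contractions $(\,,\,):A_X\times A_f\to A_Y$, zero when an argument is zero, extended fibrewise for $g\in Set_\bullet(Y,Z)$ to $\circ:A_g\times A_f\to A_{g\circ f}$, $(\,,\,):A_{g\circ f}\times A_f\to A_g$ via $(a\circ b)^{(z)}=a^{(z)}\circ b|_z$, $(c,b)^{(z)}=(c^{(z)},b|_z)$ ($b|_z=(b^{(y)})_{y\in g^{-1}(z)}$ for the restriction $f|_z:(g\circ f)^{-1}(z)\rightharpoonup g^{-1}(z)$); and a unit $1\in A_{[1]}$ (with transports $1_x$, and $1_f\in A_f$ for partial bijections $f$ with components $1_{f^t(y)}$ on the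 image, $0$ elsewhere); satisfying for $W\xleftarrow{h}Z\xleftarrow{g}Y\xleftarrow{f}X$: $d\circ(c\circ b)=(d\circ c)\circ b$; $(d,a\circ c)=((d,c),a)$ ($d\in A_{h\circ g\circ f},a\in A_g,c\in A_f$); $(d\circ c,a)=(d,(a,c))$ ($d\in A_{h\circ g},a\in A_{g\circ f},c\in A_f$); $(d\circ a,c)=d\circ(a,c)$ ($d\in A_h,a\in A_{g\circ f},c\in A_f$); for $Z\xrightarrow{g}Y\xleftarrow{f}X$, $h\in Set_\bullet(Y,W)$, $P=\{(z,x)\in D(g)\times D(f):g(z)=f(x)\}$ with projections $\tilde f,\tilde g$, $\tilde c^{(z)}=c^{(g(z))}$, $\tilde a^{(x)}=a^{(f(x))}$: $(d,c)\circ a=(d\circ\tilde a,\tilde c)$ ($d\in A_{h\circ f},a\in A_g,c\in A_f$); $a\circ1_{id_X}=1_{id_Y}\circ a=(a,1_{id_X})=a$ ($a\in A_f$); $a\circ1_{f^t}=(a,1_f)=f_A(a)$ ($a\in A_X$, $f$ a partial bijection). $A_{[1]}$ is a commutative monoid under $\circ$ with unit $1$. An h-ideal is a subset $\mathfrak a\subseteq A_{[1]}$ with $(b\circ c,d)\in\mathfrak a$ for all finite $X$, $b,d\in A_X$, $c\in\mathfrak a^X\subseteq(A_{[1]})^X$; proper if $1\notin\mathfrak a$. A prime is a proper h-ideal $\mathfrak p$ with $a\circ b\in\mathfrak p\Rightarrow a\in\mathfrak p$ or $b\in\mathfrak p$; $spec(A)$ is the set of primes, with the Zariski topology whose closed sets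 are $V(\mathfrak a)=\{\mathfrak p:\mathfrak p\supseteq\mathfrak a\}$, $\mathfrak a\subseteq A_{[1]}$. *)

theory Defs
  imports Main "HOL-Library.Nat_Bijection"
begin

text \<open>Finite sets are modelled as finite subsets of nat; [1] is the set {1}.
  A partial map f : X -> Y is a map nat -> nat option with dom f in X, ran f in Y.
  Elements of all A_X live in one carrier type 'e; A_X is gr_car A X.\<close>

record 'e gring =
  gr_car   :: "nat set \<Rightarrow> 'e set"
  gr_zero  :: "nat set \<Rightarrow> 'e"
  gr_tr    :: "nat set \<Rightarrow> nat set \<Rightarrow> (nat \<Rightarrow> nat option) \<Rightarrow> 'e \<Rightarrow> 'e"
  gr_mult  :: "nat set \<Rightarrow> nat set \<Rightarrow> (nat \<Rightarrow> nat option) \<Rightarrow> 'e \<Rightarrow> (nat \<Rightarrow> 'e) \<Rightarrow> 'e"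
  gr_contr :: "nat set \<Rightarrow> nat set \<Rightarrow> (nat \<Rightarrow> nat option) \<Rightarrow> 'e \<Rightarrow> (nat \<Rightarrow> 'e) \<Rightarrow> 'e"
  gr_one   :: 'e

text \<open>gr_tr X Y f : A_X -> A_Y for a partial bijection f;
  gr_mult X Y f a b = a o b for f : X -> Y, a in A_Y, b in A_f, result in A_X;
  gr_contr X Y f c b = (c,b) for c in A_X, b in A_f, result in A_Y.\<close>

definition pmap :: "nat set \<Rightarrow> nat set \<Rightarrow> (nat \<Rightarrow> nat option) \<Rightarrow> bool" where
  "pmap X Y f \<longleftrightarrow> dom f \<subseteq> X \<and> ran f \<subseteq> Y"

definition pbij :: "nat set \<Rightarrow> nat set \<Rightarrow> (nat \<Rightarrow> nat option) \<Rightarrow> bool" where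
  "pbij X Y f \<longleftrightarrow> pmap X Y f \<and> inj_on f (dom f)"

definition pinv :: "(nat \<Rightarrow> nat option) \<Rightarrow> nat \<Rightarrow> nat option" where
  "pinv f y = (if y \<in> ran f then Some (THE x. f x = Some y) else None)"

definition fib :: "(nat \<Rightarrow> nat option) \<Rightarrow> nat \<Rightarrow> nat set" where
  "fib f y = {x. f x = Some y}"

definition idm :: "nat set \<Rightarrow> nat \<Rightarrow> nat option" where
  "idm X = (\<lambda>x. if x \<in> X then Some x else None)"

definition cmap :: "nat set \<Rightarrow> nat \<Rightarrow> nat option" where
  "cmap X = (\<lambda>x. if x \<in> X then Some 1 else None)"

definition restr :: "(nat \<Rightarrow> 'e) \<Rightarrow> nat set \<Rightarrow> nat \<Rightarrow> 'e" where
  "restr b S = (\<lambda>y. if y \<in> S then b y else undefined)"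

definition vec1 :: "'e \<Rightarrow> nat \<Rightarrow> 'e" where
  "vec1 d = (\<lambda>y. if y = 1 then d else undefined)"

text \<open>A_f = product over y in Y of A_{f^{-1}(y)} (extensional functions on Y).\<close>
definition Af :: "'e gring \<Rightarrow> nat set \<Rightarrow> (nat \<Rightarrow> nat option) \<Rightarrow> (nat \<Rightarrow> 'e) set" where
  "Af A Y f = {b. (\<forall>y\<in>Y. b y \<in> gr_car A (fib f y)) \<and> (\<forall>y. y \<notin> Y \<longrightarrow> b y = undefined)}"

definition zeroF :: "'e gring \<Rightarrow> nat set \<Rightarrow> (nat \<Rightarrow> nat option) \<Rightarrow> nat \<Rightarrow> 'e" where
  "zeroF A Y f = (\<lambda>y. if y \<in> Y then gr_zero A (fib f y) else undefined)"

definition one_at :: "'e gring \<Rightarrow> nat \<Rightarrow> 'e" where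
  "one_at A x = gr_tr A {1} {x} [1 \<mapsto> x] (gr_one A)"

definition one_f :: "'e gring \<Rightarrow> nat set \<Rightarrow> (nat \<Rightarrow> nat option) \<Rightarrow> nat \<Rightarrow> 'e" where
  "one_f A Y f = (\<lambda>y. if y \<in> Y then (case pinv f y of Some x \<Rightarrow> one_at A x | None \<Rightarrow> gr_zero A {})
                     else undefined)"

text \<open>Fibrewise extensions: for f : X -> Y, g : Y -> Z,
  ext_mult : A_g x A_f -> A_{g o f} and ext_contr : A_{g o f} x A_f -> A_g.\<close>
definition ext_mult :: "'e gring \<Rightarrow> nat set \<Rightarrow> (nat \<Rightarrow> nat option) \<Rightarrow> (nat \<Rightarrow> nat option)
    \<Rightarrow> (nat \<Rightarrow> 'e) \<Rightarrow> (nat \<Rightarrow> 'e) \<Rightarrow> nat \<Rightarrow> 'e" where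
  "ext_mult A Z g f a b = (\<lambda>z. if z \<in> Z then
      gr_mult A (fib (g \<circ>\<^sub>m f) z) (fib g z) (f |` fib (g \<circ>\<^sub>m f) z) (a z) (restr b (fib g z))
    else undefined)"

definition ext_contr :: "'e gring \<Rightarrow> nat set \<Rightarrow> (nat \<Rightarrow> nat option) \<Rightarrow> (nat \<Rightarrow> nat option)
    \<Rightarrow> (nat \<Rightarrow> 'e) \<Rightarrow> (nat \<Rightarrow> 'e) \<Rightarrow> nat \<Rightarrow> 'e" where
  "ext_contr A Z g f c b = (\<lambda>z. if z \<in> Z then
      gr_contr A (fib (g \<circ>\<^sub>m f) z) (fib g z) (f |` fib (g \<circ>\<^sub>m f) z) (c z) (restr b (fib g z))
    else undefined)"

text \<open>Fibre product P of Z -g-> Y <-f- X (pairs encoded in nat) and its projections.\<close>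
definition pb :: "(nat \<Rightarrow> nat option) \<Rightarrow> (nat \<Rightarrow> nat option) \<Rightarrow> nat set" where
  "pb g f = {prod_encode (z, x) | z x. \<exists>y. g z = Some y \<and> f x = Some y}"

definition prj1 :: "nat set \<Rightarrow> nat \<Rightarrow> nat option" where
  "prj1 P = (\<lambda>p. if p \<in> P then Some (fst (prod_decode p)) else None)"

definition prj2 :: "nat set \<Rightarrow> nat \<Rightarrow> nat option" where
  "prj2 P = (\<lambda>p. if p \<in> P then Some (snd (prod_decode p)) else None)"

text \<open>a~ in A_{g~} (g~ : P -> X), with a~^(x) = a^(f x) transported along z |-> (z,x).\<close>
definition atil :: "'e gring \<Rightarrow> nat set \<Rightarrow> (nat \<Rightarrow> nat option) \<Rightarrow> (nat \<Rightarrow> nat option)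
    \<Rightarrow> (nat \<Rightarrow> 'e) \<Rightarrow> nat \<Rightarrow> 'e" where
  "atil A X g f a = (\<lambda>x. if x \<in> X then
      (case f x of
         Some y \<Rightarrow> gr_tr A (fib g y) (fib (prj2 (pb g f)) x)
                     (\<lambda>z. if z \<in> fib g y then Some (prod_encode (z, x)) else None) (a y)
       | None \<Rightarrow> gr_zero A (fib (prj2 (pb g f)) x))
    else undefined)"

text \<open>c~ in A_{f~} (f~ : P -> Z), with c~^(z) = c^(g z) transported along x |-> (z,x).\<close>
definition ctil :: "'e gring \<Rightarrow> nat set \<Rightarrow> (nat \<Rightarrow> nat option) \<Rightarrow> (nat \<Rightarrow> nat option)
    \<Rightarrow> (nat \<Rightarrow> 'e) \<Rightarrow> nat \<Rightarrow> 'e" where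
  "ctil A Z g f c = (\<lambda>z. if z \<in> Z then
      (case g z of
         Some y \<Rightarrow> gr_tr A (fib f y) (fib (prj1 (pb g f)) z)
                     (\<lambda>x. if x \<in> fib f y then Some (prod_encode (z, x)) else None) (c y)
       | None \<Rightarrow> gr_zero A (fib (prj1 (pb g f)) z))
    else undefined)"

definition mult1 :: "'e gring \<Rightarrow> 'e \<Rightarrow> 'e \<Rightarrow> 'e" where
  "mult1 A a b = gr_mult A {1} {1} (idm {1}) a (vec1 b)"

definition gr_functor :: "'e gring \<Rightarrow> bool" where
  "gr_functor A \<longleftrightarrow>
    (\<forall>X. finite X \<longrightarrow> gr_zero A X \<in> gr_car A X) \<and>
    gr_car A {} = {gr_zero A {}} \<and>
    (\<forall>X Y f. finite X \<and> finite Y \<and> pbij X Y f \<longrightarrow>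
        (\<forall>a\<in>gr_car A X. gr_tr A X Y f a \<in> gr_car A Y) \<and> gr_tr A X Y f (gr_zero A X) = gr_zero A Y) \<and>
    (\<forall>X. finite X \<longrightarrow> (\<forall>a\<in>gr_car A X. gr_tr A X X (idm X) a = a)) \<and>
    (\<forall>X Y Z f g. finite X \<and> finite Y \<and> finite Z \<and> pbij X Y f \<and> pbij Y Z g \<longrightarrow>
        (\<forall>a\<in>gr_car A X. gr_tr A X Z (g \<circ>\<^sub>m f) a = gr_tr A Y Z g (gr_tr A X Y f a)))"

definition gr_ops :: "'e gring \<Rightarrow> bool" where
  "gr_ops A \<longleftrightarrow>
    gr_one A \<in> gr_car A {1} \<and>
    (\<forall>X Y f. finite X \<and> finite Y \<and> pmap X Y f \<longrightarrow>
       (\<forall>a\<in>gr_car A Y. \<forall>b\<in>Af A Y f. gr_mult A X Y f a b \<in> gr_car A X) \<and>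
       (\<forall>c\<in>gr_car A X. \<forall>b\<in>Af A Y f. gr_contr A X Y f c b \<in> gr_car A Y) \<and>
       (\<forall>b\<in>Af A Y f. gr_mult A X Y f (gr_zero A Y) b = gr_zero A X) \<and>
       (\<forall>b\<in>Af A Y f. gr_contr A X Y f (gr_zero A X) b = gr_zero A Y) \<and>
       (\<forall>a\<in>gr_car A Y. gr_mult A X Y f a (zeroF A Y f) = gr_zero A X) \<and>
       (\<forall>c\<in>gr_car A X. gr_contr A X Y f c (zeroF A Y f) = gr_zero A Y))"

definition gr_assoc_axioms :: "'e gring \<Rightarrow> bool" where
  "gr_assoc_axioms A \<longleftrightarrow>
    (\<forall>X Y Z W f g h. finite X \<and> finite Y \<and> finite Z \<and> finite W \<and>
        pmap X Y f \<and> pmap Y Z g \<and> pmap Z W h \<longrightarrow>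
      (\<forall>d\<in>Af A W h. \<forall>c\<in>Af A Z g. \<forall>b\<in>Af A Y f.
         ext_mult A W h (g \<circ>\<^sub>m f) d (ext_mult A Z g f c b)
         = ext_mult A W (h \<circ>\<^sub>m g) f (ext_mult A W h g d c) b) \<and>
      (\<forall>d\<in>Af A W (h \<circ>\<^sub>m g \<circ>\<^sub>m f). \<forall>a\<in>Af A Z g. \<forall>c\<in>Af A Y f.
         ext_contr A W h (g \<circ>\<^sub>m f) d (ext_mult A Z g f a c)
         = ext_contr A W h g (ext_contr A W (h \<circ>\<^sub>m g) f d c) a) \<and>
      (\<forall>d\<in>Af A W (h \<circ>\<^sub>m g). \<forall>a\<in>Af A Z (g \<circ>\<^sub>m f). \<forall>c\<in>Af A Y f.
         ext_contr A W h (g \<circ>\<^sub>m f) (ext_mult A W (h \<circ>\<^sub>m g) f d c) a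
         = ext_contr A W h g d (ext_contr A Z g f a c)) \<and>
      (\<forall>d\<in>Af A W h. \<forall>a\<in>Af A Z (g \<circ>\<^sub>m f). \<forall>c\<in>Af A Y f.
         ext_contr A W (h \<circ>\<^sub>m g) f (ext_mult A W h (g \<circ>\<^sub>m f) d a) c
         = ext_mult A W h g d (ext_contr A Z g f a c)))"

definition gr_pullback_axiom :: "'e gring \<Rightarrow> bool" where
  "gr_pullback_axiom A \<longleftrightarrow>
    (\<forall>X Y Z W f g h. finite X \<and> finite Y \<and> finite Z \<and> finite W \<and>
        pmap Z Y g \<and> pmap X Y f \<and> pmap Y W h \<longrightarrow>
      (\<forall>d\<in>Af A W (h \<circ>\<^sub>m f). \<forall>a\<in>Af A Y g. \<forall>c\<in>Af A Y f.
         ext_mult A W h g (ext_contr A W h f d c) a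
         = ext_contr A W (h \<circ>\<^sub>m g) (prj1 (pb g f))
             (ext_mult A W (h \<circ>\<^sub>m f) (prj2 (pb g f)) d (atil A X g f a))
             (ctil A Z g f c)))"

definition gr_unit_axioms :: "'e gring \<Rightarrow> bool" where
  "gr_unit_axioms A \<longleftrightarrow>
    (\<forall>X Y f. finite X \<and> finite Y \<and> pmap X Y f \<longrightarrow>
      (\<forall>a\<in>Af A Y f.
         ext_mult A Y f (idm X) a (one_f A X (idm X)) = a \<and>
         ext_mult A Y (idm Y) f (one_f A Y (idm Y)) a = a \<and>
         ext_contr A Y f (idm X) a (one_f A X (idm X)) = a)) \<and>
    (\<forall>X Y f. finite X \<and> finite Y \<and> pbij X Y f \<longrightarrow>
      (\<forall>a\<in>gr_car A X.
         gr_mult A Y X (pinv f) a (one_f A X (pinv f)) = gr_tr A X Y f a \<and>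
         gr_contr A X Y f a (one_f A Y f) = gr_tr A X Y f a))"

definition gr_comm_monoid :: "'e gring \<Rightarrow> bool" where
  "gr_comm_monoid A \<longleftrightarrow>
    (\<forall>a\<in>gr_car A {1}. \<forall>b\<in>gr_car A {1}. \<forall>c\<in>gr_car A {1}.
       mult1 A (mult1 A a b) c = mult1 A a (mult1 A b c)) \<and>
    (\<forall>a\<in>gr_car A {1}. \<forall>b\<in>gr_car A {1}. mult1 A a b = mult1 A b a) \<and>
    (\<forall>a\<in>gr_car A {1}. mult1 A (gr_one A) a = a \<and> mult1 A a (gr_one A) = a)"

definition generalized_ring :: "'e gring \<Rightarrow> bool" where
  "generalized_ring A \<longleftrightarrow> gr_functor A \<and> gr_ops A \<and> gr_assoc_axioms A \<and>
     gr_pullback_axiom A \<and> gr_unit_axioms A \<and> gr_comm_monoid A"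

text \<open>c in (A_[1])^X viewed in A_{id_X} via the transports A_[1] -> A_{x}.\<close>
definition cvec :: "'e gring \<Rightarrow> nat set \<Rightarrow> (nat \<Rightarrow> 'e) \<Rightarrow> nat \<Rightarrow> 'e" where
  "cvec A X c = (\<lambda>x. if x \<in> X then gr_tr A {1} {x} [1 \<mapsto> x] (c x) else undefined)"

definition h_ideal :: "'e gring \<Rightarrow> 'e set \<Rightarrow> bool" where
  "h_ideal A I \<longleftrightarrow> I \<subseteq> gr_car A {1} \<and>
    (\<forall>X. finite X \<longrightarrow> (\<forall>b\<in>gr_car A X. \<forall>d\<in>gr_car A X. \<forall>c. (\<forall>x\<in>X. c x \<in> I) \<longrightarrow>
        gr_contr A X {1} (cmap X) (gr_mult A X X (idm X) b (cvec A X c)) (vec1 d) \<in> I))"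

definition is_prime :: "'e gring \<Rightarrow> 'e set \<Rightarrow> bool" where
  "is_prime A P \<longleftrightarrow> h_ideal A P \<and> gr_one A \<notin> P \<and>
    (\<forall>a\<in>gr_car A {1}. \<forall>b\<in>gr_car A {1}. mult1 A a b \<in> P \<longrightarrow> a \<in> P \<or> b \<in> P)"

definition spec :: "'e gring \<Rightarrow> 'e set set" where
  "spec A = {P. is_prime A P}"

definition zarV :: "'e gring \<Rightarrow> 'e set \<Rightarrow> 'e set set" where
  "zarV A I = {P \<in> spec A. I \<subseteq> P}"

definition zar_open :: "'e gring \<Rightarrow> 'e set set \<Rightarrow> bool" where
  "zar_open A U \<longleftrightarrow> (\<exists>I. I \<subseteq> gr_car A {1} \<and> U = spec A - zarV A I)"

definition basicD :: "'e gring \<Rightarrow> 'e \<Rightarrow> 'e set set" where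
  "basicD A a = {P \<in> spec A. a \<notin> P}"

definition zar_compact :: "'e gring \<Rightarrow> 'e set set \<Rightarrow> bool" where
  "zar_compact A S \<longleftrightarrow> (\<forall>\<U>. (\<forall>U\<in>\<U>. zar_open A U) \<and> S \<subseteq> \<Union>\<U> \<longrightarrow>
      (\<exists>\<V>\<subseteq>\<U>. finite \<V> \<and> S \<subseteq> \<Union>\<V>))"

end

theory Submission imports Defs begin

declare One_nat_def[simp del]

definition vat :: "nat \<Rightarrow> 'e \<Rightarrow> nat \<Rightarrow> 'e" where
  "vat x b = (\<lambda>y. if y = x then b else undefined)"

lemma vec1_vat: "vec1 = vat 1" by (auto simp: vec1_def vat_def fun_eq_iff)
lemma vat_at[simp]: "vat x b x = b" by (simp add: vat_def)
lemma restr_single[simp]: "restr b {x} = vat x (b x)" by (auto simp: restr_def vat_def fun_eq_iff)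
lemma idm_comp_sing[simp]: "b \<in> S \<Longrightarrow> idm S \<circ>\<^sub>m [a\<mapsto>b] = [a\<mapsto>b]"
  by (auto simp: idm_def map_comp_def fun_eq_iff)
lemma sing_comp_idm[simp]: "a \<in> S \<Longrightarrow> [a\<mapsto>b] \<circ>\<^sub>m idm S = [a\<mapsto>b]"
  by (auto simp: idm_def map_comp_def fun_eq_iff)
lemma fib_idm[simp]: "fib (idm S) y = (if y \<in> S then {y} else {})" by (auto simp: fib_def idm_def)
lemma fib_sing[simp]: "fib [a\<mapsto>b] y = (if y = b then {a} else {})" by (auto simp: fib_def)
lemma idm_comp: "ran f \<subseteq> S \<Longrightarrow> idm S \<circ>\<^sub>m f = f"
  by (auto simp: idm_def map_comp_def fun_eq_iff ran_def split: option.splits)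
lemma comp_idm: "dom f \<subseteq> S \<Longrightarrow> f \<circ>\<^sub>m idm S = f"
proof (rule ext)
  fix x assume d: "dom f \<subseteq> S"
  show "(f \<circ>\<^sub>m idm S) x = f x"
  proof (cases "x \<in> S")
    case False hence "f x = None" using d by auto
    thus ?thesis using False by (simp add: idm_def map_comp_def)
  qed (simp add: idm_def map_comp_def)
qed
lemma sing_comp[simp]: "[b\<mapsto>c] \<circ>\<^sub>m [a\<mapsto>b] = [a\<mapsto>c]"
  by (auto simp: map_comp_def fun_eq_iff)
lemma idm_sing: "idm {a} = [a\<mapsto>a]" by (auto simp: idm_def fun_eq_iff)
lemma restr_sing[simp]: "[a\<mapsto>b] |` {a} = [a\<mapsto>b]" by (auto simp: restrict_map_def fun_eq_iff)
lemma pinv_sing[simp]: "pinv [a\<mapsto>b] = [b\<mapsto>a]" by (auto simp: pinv_def fun_eq_iff ran_def)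
lemma pbij_sing[simp]: "pbij {a} {b} [a\<mapsto>b]" by (auto simp: pbij_def pmap_def ran_def)
lemma pmap_sing[simp]: "pmap {a} {b} [a\<mapsto>b]" by (auto simp: pmap_def ran_def)
lemma pmap_idm[simp]: "pmap S S (idm S)" unfolding pmap_def idm_def by (auto simp: ran_def dom_def split: if_splits)
lemma pinv_idm[simp]: "pinv (idm S) = idm S"
proof (rule ext)
  fix y show "pinv (idm S) y = idm S y"
  proof (cases "y \<in> S")
    case True
    hence "(THE x. idm S x = Some y) = y" by (intro the_equality) (auto simp: idm_def split: if_splits)
    with True show ?thesis by (auto simp: pinv_def ran_def idm_def)
  qed (auto simp: pinv_def ran_def idm_def split: if_splits)
qed
lemma pbij_idm[simp]: "pbij S S (idm S)" unfolding pbij_def using pmap_idm by (auto simp: inj_on_def idm_def split: if_splits)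

lemma idm_idm[simp]: "idm S \<circ>\<^sub>m idm S = idm S" by (auto simp: idm_def map_comp_def fun_eq_iff)
lemma restr_idm[simp]: "idm S |` S = idm S" by (auto simp: idm_def restrict_map_def fun_eq_iff)
lemma cmap_restr[simp]: "cmap S |` S = cmap S" by (auto simp: cmap_def restrict_map_def fun_eq_iff)
lemma fib_cmap[simp]: "fib (cmap S) y = (if y = 1 then S else {})" by (auto simp: fib_def cmap_def)
lemma pmap_cmap[simp]: "pmap S {1} (cmap S)" unfolding pmap_def cmap_def by (auto simp: ran_def dom_def split: if_splits)
lemma idm_comp_cmap[simp]: "idm {1} \<circ>\<^sub>m cmap S = cmap S" by (auto simp: idm_def cmap_def map_comp_def fun_eq_iff)
lemma cmap_in[simp]: "x \<in> S \<Longrightarrow> cmap S x = Some 1" by (simp add: cmap_def)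
lemma idm_in[simp]: "x \<in> S \<Longrightarrow> idm S x = Some x" by (simp add: idm_def)
lemma cmap_1: "cmap {1} = idm {1}" by (auto simp: idm_def cmap_def fun_eq_iff)

definition en :: "nat \<Rightarrow> nat" where "en x = prod_encode (1, x)"
lemma en_inj[simp]: "en x = en y \<longleftrightarrow> x = y" by (simp add: en_def)
lemma dec_en[simp]: "prod_decode (en x) = (1, x)" by (simp add: en_def)
definition phi :: "nat set \<Rightarrow> nat \<Rightarrow> nat option" where "phi X = (\<lambda>x. if x \<in> X then Some (en x) else None)"

lemma pb_P[simp]: "pb (idm {1}) (cmap X) = en ` X"
  by (auto simp: pb_def idm_def cmap_def en_def split: if_splits)
lemma prj1_P[simp]: "prj1 (en ` X) = cmap (en ` X)"
  by (auto simp: prj1_def cmap_def fun_eq_iff)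
lemma prj2_en[simp]: "x \<in> X \<Longrightarrow> prj2 (en ` X) (en x) = Some x"
  by (simp add: prj2_def)
lemma fib_prj2[simp]: "fib (prj2 (en ` X)) x = (if x \<in> X then {en x} else {})"
  by (auto simp: fib_def prj2_def)
lemma pmap_prj2[simp]: "pmap (en ` X) X (prj2 (en ` X))"
  unfolding pmap_def prj2_def by (auto simp: ran_def dom_def split: if_splits)
lemma pbij_phi[simp]: "pbij X (en ` X) (phi X)"
  unfolding pbij_def pmap_def phi_def by (auto simp: ran_def dom_def inj_on_def split: if_splits)
lemma pinv_phi[simp]: "pinv (phi X) = prj2 (en ` X)"
proof (rule ext)
  fix q show "pinv (phi X) q = prj2 (en ` X) q"
  proof (cases "q \<in> en ` X")
    case True then obtain x where x: "x \<in> X" "q = en x" by auto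
    hence "(THE y. phi X y = Some q) = x" by (intro the_equality) (auto simp: phi_def split: if_splits)
    with x show ?thesis by (auto simp: pinv_def ran_def phi_def)
  next
    case False thus ?thesis by (auto simp: pinv_def ran_def phi_def prj2_def split: if_splits)
  qed
qed
lemma pinv_prj2[simp]: "x \<in> X \<Longrightarrow> pinv (prj2 (en ` X)) x = Some (en x)"
proof -
  assume x: "x \<in> X"
  hence "(THE q. prj2 (en ` X) q = Some x) = en x"
    by (intro the_equality) (auto simp: prj2_def split: if_splits)
  moreover have "x \<in> ran (prj2 (en ` X))" unfolding ran_def using x by (auto intro!: exI[of _ "en x"])
  ultimately show ?thesis by (simp add: pinv_def)
qed
lemma cmap_comp_prj2[simp]: "cmap X \<circ>\<^sub>m prj2 (en ` X) = cmap (en ` X)"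
  by (auto simp: cmap_def prj2_def map_comp_def fun_eq_iff)
lemma idm_comp_prj2[simp]: "idm X \<circ>\<^sub>m prj2 (en ` X) = prj2 (en ` X)"
  by (auto simp: idm_def prj2_def map_comp_def fun_eq_iff)
lemma prj2_comp_idm[simp]: "prj2 (en ` X) \<circ>\<^sub>m idm (en ` X) = prj2 (en ` X)"
  by (auto simp: idm_def prj2_def map_comp_def fun_eq_iff)
lemma prj2_restr[simp]: "prj2 (en ` X) |` (en ` X) = prj2 (en ` X)"
  by (auto simp: prj2_def restrict_map_def fun_eq_iff)
lemma prj2_restr_sing[simp]: "x \<in> X \<Longrightarrow> prj2 (en ` X) |` {en x} = [en x \<mapsto> x]"
  by (auto simp: prj2_def restrict_map_def fun_eq_iff)
lemma cmap_restr2[simp]: "cmap (en ` X) |` (en ` X) = cmap (en ` X)" by simp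
lemma restr_atil[simp]: "restr (atil A X g f a) X = atil A X g f a" by (auto simp: restr_def atil_def fun_eq_iff)
lemma restr_ext_mult[simp]: "restr (ext_mult A Z g f a b) Z = ext_mult A Z g f a b" by (auto simp: restr_def ext_mult_def fun_eq_iff)
lemma restr_cvec[simp]: "restr (cvec A X c) X = cvec A X c" by (auto simp: restr_def cvec_def fun_eq_iff)
lemma cmap_comp_idm[simp]: "cmap S \<circ>\<^sub>m idm S = cmap S" by (auto simp: idm_def cmap_def map_comp_def fun_eq_iff)
lemma restr_one_f[simp]: "restr (one_f A X f) X = one_f A X f" by (auto simp: restr_def one_f_def fun_eq_iff)
lemma restr_ext: "(\<And>y. y \<notin> S \<Longrightarrow> F y = undefined) \<Longrightarrow> restr F S = F"
  by (auto simp: restr_def fun_eq_iff)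

locale GR = fixes A :: "'e gring" assumes GR: "generalized_ring A"
begin

lemma GF: "gr_functor A" and GO: "gr_ops A" and GA: "gr_assoc_axioms A" and GP: "gr_pullback_axiom A"
  and GU: "gr_unit_axioms A" and GC: "gr_comm_monoid A"
  using GR unfolding generalized_ring_def by auto

abbreviation car where "car \<equiv> gr_car A"
abbreviation tr where "tr \<equiv> gr_tr A"
abbreviation mlt where "mlt \<equiv> gr_mult A"
abbreviation ctr where "ctr \<equiv> gr_contr A"
abbreviation one where "one \<equiv> gr_one A"

lemma tr_car: "finite X \<Longrightarrow> finite Y \<Longrightarrow> pbij X Y f \<Longrightarrow> a \<in> car X \<Longrightarrow> tr X Y f a \<in> car Y"
  using GF unfolding gr_functor_def by auto
lemma tr_id: "finite X \<Longrightarrow> a \<in> car X \<Longrightarrow> tr X X (idm X) a = a"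
  using GF unfolding gr_functor_def by auto
lemma tr_comp: "finite X \<Longrightarrow> finite Y \<Longrightarrow> finite Z \<Longrightarrow> pbij X Y f \<Longrightarrow> pbij Y Z g \<Longrightarrow> a \<in> car X
   \<Longrightarrow> tr X Z (g \<circ>\<^sub>m f) a = tr Y Z g (tr X Y f a)"
  using GF unfolding gr_functor_def by auto
lemma one_car: "one \<in> car {1}"
  using GO unfolding gr_ops_def by auto
lemma mlt_car: "finite X \<Longrightarrow> finite Y \<Longrightarrow> pmap X Y f \<Longrightarrow> a \<in> car Y \<Longrightarrow> b \<in> Af A Y f \<Longrightarrow> mlt X Y f a b \<in> car X"
  using GO unfolding gr_ops_def by auto
lemma ctr_car: "finite X \<Longrightarrow> finite Y \<Longrightarrow> pmap X Y f \<Longrightarrow> c \<in> car X \<Longrightarrow> b \<in> Af A Y f \<Longrightarrow> ctr X Y f c b \<in> car Y"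
  using GO unfolding gr_ops_def by auto

lemma assoc1: "finite X \<Longrightarrow> finite Y \<Longrightarrow> finite Z \<Longrightarrow> finite W \<Longrightarrow>
        pmap X Y f \<Longrightarrow> pmap Y Z g \<Longrightarrow> pmap Z W h \<Longrightarrow>
      d\<in>Af A W h \<Longrightarrow> c\<in>Af A Z g \<Longrightarrow> b\<in>Af A Y f \<Longrightarrow>
         ext_mult A W h (g \<circ>\<^sub>m f) d (ext_mult A Z g f c b)
         = ext_mult A W (h \<circ>\<^sub>m g) f (ext_mult A W h g d c) b"
  using GA unfolding gr_assoc_axioms_def by auto

lemma pullback: "finite X \<Longrightarrow> finite Y \<Longrightarrow> finite Z \<Longrightarrow> finite W \<Longrightarrow>
        pmap Z Y g \<Longrightarrow> pmap X Y f \<Longrightarrow> pmap Y W h \<Longrightarrow>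
      d\<in>Af A W (h \<circ>\<^sub>m f) \<Longrightarrow> a\<in>Af A Y g \<Longrightarrow> c\<in>Af A Y f \<Longrightarrow>
         ext_mult A W h g (ext_contr A W h f d c) a
         = ext_contr A W (h \<circ>\<^sub>m g) (prj1 (pb g f))
             (ext_mult A W (h \<circ>\<^sub>m f) (prj2 (pb g f)) d (atil A X g f a))
             (ctil A Z g f c)"
  using GP unfolding gr_pullback_axiom_def by auto

lemma unit_left: "finite X \<Longrightarrow> finite Y \<Longrightarrow> pmap X Y f \<Longrightarrow> a\<in>Af A Y f \<Longrightarrow>
         ext_mult A Y (idm Y) f (one_f A Y (idm Y)) a = a"
  using GU unfolding gr_unit_axioms_def by auto
lemma unit_tr_mult: "finite X \<Longrightarrow> finite Y \<Longrightarrow> pbij X Y f \<Longrightarrow> a\<in>car X \<Longrightarrow>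
         mlt Y X (pinv f) a (one_f A X (pinv f)) = tr X Y f a"
  using GU unfolding gr_unit_axioms_def by auto
lemma unit_tr_ctr: "finite X \<Longrightarrow> finite Y \<Longrightarrow> pbij X Y f \<Longrightarrow> a\<in>car X \<Longrightarrow>
         ctr X Y f a (one_f A Y f) = tr X Y f a"
  using GU unfolding gr_unit_axioms_def by auto

lemma m_assoc: "a\<in>car {1} \<Longrightarrow> b\<in>car {1} \<Longrightarrow> c\<in>car {1} \<Longrightarrow> mult1 A (mult1 A a b) c = mult1 A a (mult1 A b c)"
  using GC unfolding gr_comm_monoid_def by auto
lemma m_comm: "a\<in>car {1} \<Longrightarrow> b\<in>car {1} \<Longrightarrow> mult1 A a b = mult1 A b a"
  using GC unfolding gr_comm_monoid_def by auto
lemma m_one: "a\<in>car {1} \<Longrightarrow> mult1 A one a = a"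
  using GC unfolding gr_comm_monoid_def by auto

lemma ext_mult_at: "z \<in> Z \<Longrightarrow> ext_mult A Z g f a b z =
   mlt (fib (g \<circ>\<^sub>m f) z) (fib g z) (f |` fib (g \<circ>\<^sub>m f) z) (a z) (restr b (fib g z))"
  by (simp add: ext_mult_def)
lemma ext_contr_at: "z \<in> Z \<Longrightarrow> ext_contr A Z g f a b z =
   ctr (fib (g \<circ>\<^sub>m f) z) (fib g z) (f |` fib (g \<circ>\<^sub>m f) z) (a z) (restr b (fib g z))"
  by (simp add: ext_contr_def)


lemma one_at_1[simp]: "one_at A 1 = one"
  using tr_id[of "{1}" one] one_car by (simp add: one_at_def idm_sing)
lemma one_at_car: "one_at A x \<in> car {x}"
  using tr_car[of "{1}" "{x}" "[1\<mapsto>x]" one] one_car by (simp add: one_at_def)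
lemma one_f_idm: "y \<in> Y \<Longrightarrow> one_f A Y (idm Y) y = one_at A y"
  by (simp add: one_f_def)
lemma one_f_sing: "one_f A {b} [a\<mapsto>b] = vat b (one_at A a)"
  by (auto simp: one_f_def pinv_def ran_def vat_def fun_eq_iff)
lemma Af_vat: "v \<in> car (fib f x) \<Longrightarrow> vat x v \<in> Af A {x} f"
  by (auto simp: Af_def vat_def)

lemma U1: "v \<in> car {1} \<Longrightarrow> mlt {1} {x} [1\<mapsto>x] (one_at A x) (vat x v) = v"
proof -
  assume v: "v \<in> car {1}"
  have "ext_mult A {x} (idm {x}) [1\<mapsto>x] (one_f A {x} (idm {x})) (vat x v) x = vat x v x"
    using unit_left[of "{1}" "{x}" "[1\<mapsto>x]" "vat x v"] v by (simp add: Af_vat)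
  thus ?thesis by (simp add: ext_mult_at idm_comp one_f_idm)
qed

lemma tr_as_mlt: "a \<in> car {p} \<Longrightarrow> tr {p} {q} [p\<mapsto>q] a = mlt {q} {p} [q\<mapsto>p] a (vat p (one_at A q))"
  using unit_tr_mult[of "{p}" "{q}" "[p\<mapsto>q]" a] by (simp add: one_f_sing)

lemma N1: assumes al: "\<alpha> \<in> car {x}" and be: "\<beta> \<in> car {p}"
  shows "tr {p} {1} [p\<mapsto>1] (mlt {p} {x} [p\<mapsto>x] \<alpha> (vat x \<beta>))
       = mlt {1} {x} [1\<mapsto>x] \<alpha> (vat x (tr {p} {1} [p\<mapsto>1] \<beta>))"
proof -
  have ab: "mlt {p} {x} [p\<mapsto>x] \<alpha> (vat x \<beta>) \<in> car {p}"
    using mlt_car[of "{p}" "{x}" "[p\<mapsto>x]" \<alpha> "vat x \<beta>"] al be by (simp add: Af_vat)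
  have "ext_mult A {x} (idm {x}) ([p\<mapsto>x] \<circ>\<^sub>m [1\<mapsto>p]) (vat x \<alpha>) (ext_mult A {x} [p\<mapsto>x] [1\<mapsto>p] (vat x \<beta>) (vat p one))
         = ext_mult A {x} (idm {x} \<circ>\<^sub>m [p\<mapsto>x]) [1\<mapsto>p] (ext_mult A {x} (idm {x}) [p\<mapsto>x] (vat x \<alpha>) (vat x \<beta>)) (vat p one)"
    by (rule assoc1[where X="{1}" and Y="{p}" and Z="{x}"]) (auto intro!: Af_vat simp: al be one_car)
  hence "ext_mult A {x} (idm {x}) ([p\<mapsto>x] \<circ>\<^sub>m [1\<mapsto>p]) (vat x \<alpha>) (ext_mult A {x} [p\<mapsto>x] [1\<mapsto>p] (vat x \<beta>) (vat p one)) x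
         = ext_mult A {x} (idm {x} \<circ>\<^sub>m [p\<mapsto>x]) [1\<mapsto>p] (ext_mult A {x} (idm {x}) [p\<mapsto>x] (vat x \<alpha>) (vat x \<beta>)) (vat p one) x"
    by simp
  hence "mlt {1} {x} [1\<mapsto>x] \<alpha> (vat x (mlt {1} {p} [1\<mapsto>p] \<beta> (vat p one)))
     = mlt {1} {p} [1\<mapsto>p] (mlt {p} {x} [p\<mapsto>x] \<alpha> (vat x \<beta>)) (vat p one)"
    by (simp add: ext_mult_at)
  thus ?thesis using tr_as_mlt[OF ab, of 1] tr_as_mlt[OF be, of 1] by simp
qed

lemma N2: assumes c: "c \<in> car {1}" and v: "v \<in> car {1}"
  shows "mlt {1} {x} [1\<mapsto>x] (tr {1} {x} [1\<mapsto>x] c) (vat x v) = mult1 A c v"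
proof -
  have "ext_mult A {1} (idm {1}) ([x\<mapsto>1] \<circ>\<^sub>m [1\<mapsto>x]) (vat 1 c) (ext_mult A {1} [x\<mapsto>1] [1\<mapsto>x] (vat 1 (one_at A x)) (vat x v))
         = ext_mult A {1} (idm {1} \<circ>\<^sub>m [x\<mapsto>1]) [1\<mapsto>x] (ext_mult A {1} (idm {1}) [x\<mapsto>1] (vat 1 c) (vat 1 (one_at A x))) (vat x v)"
    by (rule assoc1[where X="{1}" and Y="{x}" and Z="{1}"]) (auto intro!: Af_vat simp: c v one_at_car)
  hence "ext_mult A {1} (idm {1}) ([x\<mapsto>1] \<circ>\<^sub>m [1\<mapsto>x]) (vat 1 c) (ext_mult A {1} [x\<mapsto>1] [1\<mapsto>x] (vat 1 (one_at A x)) (vat x v)) 1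
         = ext_mult A {1} (idm {1} \<circ>\<^sub>m [x\<mapsto>1]) [1\<mapsto>x] (ext_mult A {1} (idm {1}) [x\<mapsto>1] (vat 1 c) (vat 1 (one_at A x))) (vat x v) 1"
    by simp
  hence "mlt {1} {1} [1\<mapsto>1] c (vat 1 (mlt {1} {x} [1\<mapsto>x] (one_at A x) (vat x v)))
     = mlt {1} {x} [1\<mapsto>x] (mlt {x} {1} [x\<mapsto>1] c (vat 1 (one_at A x))) (vat x v)"
    by (simp add: ext_mult_at)
  thus ?thesis using tr_as_mlt[OF c, of x] U1[OF v, of x]
    by (simp add: mult1_def vec1_vat idm_sing)
qed

definition E where "E X b c d = ctr X {1} (cmap X) (mlt X X (idm X) b (cvec A X c)) (vec1 d)"

lemma atil_val: "x \<in> X \<Longrightarrow> atil A X (idm {1}) (cmap X) (vat 1 v) x = tr {1} {en x} [1\<mapsto>en x] v"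
proof -
  assume x: "x \<in> X"
  have "(\<lambda>z. if z \<in> {1} then Some (prod_encode (z, x)) else None) = [1\<mapsto>en x]"
    by (auto simp: en_def fun_eq_iff)
  thus ?thesis using x by (simp add: atil_def)
qed
lemma atil_out: "x \<notin> X \<Longrightarrow> atil A X g f a x = undefined" by (simp add: atil_def)

lemma ctil_val: "ctil A {1} (idm {1}) (cmap X) (vat 1 d) 1 = tr X (en ` X) (phi X) d"
proof -
  have "(\<lambda>x. if x \<in> X then Some (prod_encode (1, x)) else None) = phi X"
    by (auto simp: en_def phi_def fun_eq_iff)
  thus ?thesis by (simp add: ctil_def)
qed

lemma cvec_Af: "finite X \<Longrightarrow> (\<forall>x\<in>X. c x \<in> car {1}) \<Longrightarrow> cvec A X c \<in> Af A X (idm X)"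
  by (auto simp: Af_def cvec_def intro!: tr_car)
lemma e_car: "finite X \<Longrightarrow> b \<in> car X \<Longrightarrow> (\<forall>x\<in>X. c x \<in> car {1}) \<Longrightarrow> mlt X X (idm X) b (cvec A X c) \<in> car X"
  by (intro mlt_car cvec_Af) auto
lemma vec1_Af_cmap: "d \<in> car X \<Longrightarrow> vec1 d \<in> Af A {1} (cmap X)"
  by (simp add: vec1_vat Af_vat)
lemma E_car: "finite X \<Longrightarrow> b \<in> car X \<Longrightarrow> d \<in> car X \<Longrightarrow> (\<forall>x\<in>X. c x \<in> car {1}) \<Longrightarrow> E X b c d \<in> car {1}"
  unfolding E_def by (intro ctr_car e_car vec1_Af_cmap) auto

lemma S1: assumes fX: "finite X" and e: "e \<in> car X" and d: "d \<in> car X" and v: "v \<in> car {1}"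
  shows "mult1 A (ctr X {1} (cmap X) e (vec1 d)) v =
    ctr (en ` X) {1} (cmap (en ` X)) (mlt (en ` X) X (prj2 (en ` X)) e (atil A X (idm {1}) (cmap X) (vat 1 v)))
        (vat 1 (tr X (en ` X) (phi X) d))"
proof -
  have "ext_mult A {1} (idm {1}) (idm {1}) (ext_contr A {1} (idm {1}) (cmap X) (vec1 e) (vec1 d)) (vec1 v)
         = ext_contr A {1} (idm {1} \<circ>\<^sub>m idm {1}) (prj1 (pb (idm {1}) (cmap X)))
             (ext_mult A {1} (idm {1} \<circ>\<^sub>m cmap X) (prj2 (pb (idm {1}) (cmap X))) (vec1 e) (atil A X (idm {1}) (cmap X) (vec1 v)))
             (ctil A {1} (idm {1}) (cmap X) (vec1 d))"
    by (rule pullback[where X=X and Y="{1}" and Z="{1}"]) (auto simp: fX e d v vec1_vat intro!: Af_vat)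
  hence "ext_mult A {1} (idm {1}) (idm {1}) (ext_contr A {1} (idm {1}) (cmap X) (vec1 e) (vec1 d)) (vec1 v) 1
         = ext_contr A {1} (idm {1} \<circ>\<^sub>m idm {1}) (prj1 (pb (idm {1}) (cmap X)))
             (ext_mult A {1} (idm {1} \<circ>\<^sub>m cmap X) (prj2 (pb (idm {1}) (cmap X))) (vec1 e) (atil A X (idm {1}) (cmap X) (vec1 v)))
             (ctil A {1} (idm {1}) (cmap X) (vec1 d)) 1" by simp
  thus ?thesis by (simp add: ext_mult_at ext_contr_at mult1_def vec1_vat ctil_val)
qed

lemma one_f_prj2: "x \<in> X \<Longrightarrow> one_f A X (prj2 (en ` X)) x = one_at A (en x)"
  by (simp add: one_f_def)

lemma wt_Af: "finite X \<Longrightarrow> v \<in> car {1} \<Longrightarrow> atil A X (idm {1}) (cmap X) (vat 1 v) \<in> Af A X (prj2 (en ` X))"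
  by (auto simp: Af_def atil_val atil_out intro!: tr_car)

lemma S2: assumes fX: "finite X" and b: "b \<in> car X" and c: "\<forall>x\<in>X. c x \<in> car {1}" and v: "v \<in> car {1}"
  shows "mlt (en ` X) X (prj2 (en ` X)) (mlt X X (idm X) b (cvec A X c)) (atil A X (idm {1}) (cmap X) (vat 1 v))
       = mlt (en ` X) X (prj2 (en ` X)) b (ext_mult A X (idm X) (prj2 (en ` X)) (cvec A X c) (atil A X (idm {1}) (cmap X) (vat 1 v)))"
proof -
  let ?w = "atil A X (idm {1}) (cmap X) (vat 1 v)"
  have "ext_mult A {1} (cmap X) (idm X \<circ>\<^sub>m prj2 (en ` X)) (vat 1 b) (ext_mult A X (idm X) (prj2 (en ` X)) (cvec A X c) ?w)
      = ext_mult A {1} (cmap X \<circ>\<^sub>m idm X) (prj2 (en ` X)) (ext_mult A {1} (cmap X) (idm X) (vat 1 b) (cvec A X c)) ?w"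
    by (rule assoc1[where X="en ` X" and Y=X and Z=X]) (auto simp: fX b c v wt_Af cvec_Af intro!: Af_vat)
  hence "ext_mult A {1} (cmap X) (idm X \<circ>\<^sub>m prj2 (en ` X)) (vat 1 b) (ext_mult A X (idm X) (prj2 (en ` X)) (cvec A X c) ?w) 1
      = ext_mult A {1} (cmap X \<circ>\<^sub>m idm X) (prj2 (en ` X)) (ext_mult A {1} (cmap X) (idm X) (vat 1 b) (cvec A X c)) ?w 1"
    by simp
  thus ?thesis by (simp add: ext_mult_at)
qed

lemma S3: assumes fX: "finite X" and b: "b \<in> car X" and u: "u \<in> Af A X (prj2 (en ` X))"
  shows "mlt (en ` X) X (prj2 (en ` X)) b u
       = mlt (en ` X) (en ` X) (idm (en ` X)) (tr X (en ` X) (phi X) b)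
           (\<lambda>p. if p \<in> en ` X then u (snd (prod_decode p)) else undefined)"
proof -
  define P where "P = en ` X"
  define u2 where "u2 = (\<lambda>p. if p \<in> en ` X then u (snd (prod_decode p)) else undefined)"
  have fP: "finite P" using fX by (simp add: P_def)
  have u2en: "x \<in> X \<Longrightarrow> u2 (en x) = u x" for x by (simp add: u2_def)
  have ux: "x \<in> X \<Longrightarrow> u x \<in> car {en x}" for x using u by (auto simp: Af_def)
  have uout: "x \<notin> X \<Longrightarrow> u x = undefined" for x using u by (auto simp: Af_def)
  have u2Af: "u2 \<in> Af A P (idm P)"
    by (auto simp: Af_def P_def u2_def ux)
  have oneAf: "one_f A X (prj2 P) \<in> Af A X (prj2 P)"
    by (auto simp: Af_def P_def one_f_prj2 one_at_car) (auto simp: one_f_def)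
  have UL: "ext_mult A P (idm P) (idm P) (one_f A P (idm P)) u2 = u2"
    by (rule unit_left[OF fP fP]) (auto simp: u2Af)
  have U: "ext_mult A X (prj2 P) (idm P) (one_f A X (prj2 P)) u2 = u"
  proof (rule ext)
    fix x show "ext_mult A X (prj2 P) (idm P) (one_f A X (prj2 P)) u2 x = u x"
    proof (cases "x \<in> X")
      case True
      have "ext_mult A P (idm P) (idm P) (one_f A P (idm P)) u2 (en x) = u2 (en x)" using UL by simp
      thus ?thesis using True by (simp add: ext_mult_at P_def one_f_prj2 one_f_idm u2en)
    qed (simp add: ext_mult_def uout)
  qed
  have "ext_mult A {1} (cmap X) (prj2 P \<circ>\<^sub>m idm P) (vat 1 b) (ext_mult A X (prj2 P) (idm P) (one_f A X (prj2 P)) u2)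
     = ext_mult A {1} (cmap X \<circ>\<^sub>m prj2 P) (idm P) (ext_mult A {1} (cmap X) (prj2 P) (vat 1 b) (one_f A X (prj2 P))) u2"
    by (rule assoc1[where X=P and Y=P and Z=X]) (auto simp: fX fP b u2Af oneAf intro!: Af_vat, auto simp: P_def)
  hence "ext_mult A {1} (cmap X) (prj2 P \<circ>\<^sub>m idm P) (vat 1 b) (ext_mult A X (prj2 P) (idm P) (one_f A X (prj2 P)) u2) 1
     = ext_mult A {1} (cmap X \<circ>\<^sub>m prj2 P) (idm P) (ext_mult A {1} (cmap X) (prj2 P) (vat 1 b) (one_f A X (prj2 P))) u2 1"
    by simp
  hence "mlt P X (prj2 P) b u = mlt P P (idm P) (mlt P X (prj2 P) b (one_f A X (prj2 P))) u2"
    unfolding U using restr_ext[of X u, OF uout] by (simp add: ext_mult_at P_def restr_ext u2_def)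
  moreover have "mlt P X (prj2 P) b (one_f A X (prj2 P)) = tr X P (phi X) b"
    using unit_tr_mult[OF fX fP _ b, of "phi X"] by (simp add: P_def)
  ultimately show ?thesis by (simp add: P_def u2_def)
qed

lemma trtr1: "a \<in> car {1} \<Longrightarrow> tr {p} {1} [p\<mapsto>1] (tr {1} {p} [1\<mapsto>p] a) = a"
  using tr_comp[of "{1}" "{p}" "{1}" "[1\<mapsto>p]" "[p\<mapsto>1]" a] tr_id[of "{1}" a] by (simp add: idm_sing)
lemma trtr2: "a \<in> car {p} \<Longrightarrow> tr {1} {p} [1\<mapsto>p] (tr {p} {1} [p\<mapsto>1] a) = a"
  using tr_comp[of "{p}" "{1}" "{p}" "[p\<mapsto>1]" "[1\<mapsto>p]" a] tr_id[of "{p}" a] by (simp add: idm_sing)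

lemma u_val: "x \<in> X \<Longrightarrow> ext_mult A X (idm X) (prj2 (en ` X)) (cvec A X c) (atil A X (idm {1}) (cmap X) (vat 1 v)) x
   = mlt {en x} {x} [en x \<mapsto> x] (tr {1} {x} [1\<mapsto>x] (c x)) (vat x (tr {1} {en x} [1\<mapsto>en x] v))"
  by (simp add: ext_mult_at cvec_def atil_val)

lemma u_Af: assumes fX: "finite X" and c: "\<forall>x\<in>X. c x \<in> car {1}" and v: "v \<in> car {1}"
  shows "ext_mult A X (idm X) (prj2 (en ` X)) (cvec A X c) (atil A X (idm {1}) (cmap X) (vat 1 v)) \<in> Af A X (prj2 (en ` X))"
  unfolding Af_def
proof (intro CollectI conjI ballI allI impI)
  fix x assume x: "x \<in> X"
  show "ext_mult A X (idm X) (prj2 (en ` X)) (cvec A X c) (atil A X (idm {1}) (cmap X) (vat 1 v)) x \<in> car (fib (prj2 (en ` X)) x)"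
    using x c v by (simp add: u_val, intro mlt_car Af_vat tr_car) (auto intro!: tr_car)
qed (simp add: ext_mult_def)

lemma KEY: assumes fX: "finite X" and b: "b \<in> car X" and d: "d \<in> car X"
  and c: "\<forall>x\<in>X. c x \<in> car {1}" and v: "v \<in> car {1}"
  shows "\<exists>P b' c' d'. finite P \<and> b' \<in> car P \<and> d' \<in> car P \<and> (\<forall>p\<in>P. \<exists>x\<in>X. c' p = mult1 A (c x) v)
     \<and> mult1 A (E X b c d) v = E P b' c' d'"
proof -
  define P where "P = en ` X"
  define w where "w = atil A X (idm {1}) (cmap X) (vat 1 v)"
  define u where "u = ext_mult A X (idm X) (prj2 (en ` X)) (cvec A X c) w"
  define u2 where "u2 = (\<lambda>p. if p \<in> en ` X then u (snd (prod_decode p)) else undefined)"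
  define c' where "c' = (\<lambda>p. tr {p} {1} [p\<mapsto>1] (u2 p))"
  have fP: "finite P" using fX by (simp add: P_def)
  have uAf: "u \<in> Af A X (prj2 (en ` X))" unfolding u_def w_def using u_Af fX c v by blast
  have ux: "x \<in> X \<Longrightarrow> u x \<in> car {en x}" for x using uAf by (auto simp: Af_def)
  have cv: "cvec A P c' = u2"
  proof (rule ext)
    fix p show "cvec A P c' p = u2 p"
      by (cases "p \<in> P") (auto simp: cvec_def c'_def u2_def P_def trtr2 ux)
  qed
  have c'v: "c' (en x) = mult1 A (c x) v" if x: "x \<in> X" for x
  proof -
    have cx: "c x \<in> car {1}" using c x by auto
    have "c' (en x) = tr {en x} {1} [en x\<mapsto>1] (u x)" by (simp add: c'_def u2_def x)
    also have "\<dots> = mlt {1} {x} [1\<mapsto>x] (tr {1} {x} [1\<mapsto>x] (c x)) (vat x (tr {en x} {1} [en x\<mapsto>1] (tr {1} {en x} [1\<mapsto>en x] v)))"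
      unfolding u_def w_def u_val[OF x] by (rule N1) (auto intro!: tr_car simp: cx v)
    also have "\<dots> = mult1 A (c x) v" using N2[OF cx v] by (simp add: trtr1 v)
    finally show ?thesis .
  qed
  have e: "mlt X X (idm X) b (cvec A X c) \<in> car X" using e_car fX b c by blast
  have "mult1 A (E X b c d) v = ctr P {1} (cmap P) (mlt P X (prj2 P) (mlt X X (idm X) b (cvec A X c)) w) (vat 1 (tr X P (phi X) d))"
    unfolding E_def P_def w_def by (rule S1[OF fX e d v])
  also have "\<dots> = ctr P {1} (cmap P) (mlt P X (prj2 P) b u) (vat 1 (tr X P (phi X) d))"
    unfolding P_def w_def u_def by (subst S2[OF fX b c v]) (rule refl)
  also have "\<dots> = ctr P {1} (cmap P) (mlt P P (idm P) (tr X P (phi X) b) u2) (vat 1 (tr X P (phi X) d))"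
    unfolding P_def u2_def by (subst S3[OF fX b uAf]) (rule refl)
  also have "\<dots> = E P (tr X P (phi X) b) c' (tr X P (phi X) d)"
    unfolding E_def cv by (simp add: vec1_vat)
  finally have eq: "mult1 A (E X b c d) v = E P (tr X P (phi X) b) c' (tr X P (phi X) d)" .
  show ?thesis
  proof (intro exI conjI)
    show "finite P" by (rule fP)
    show "tr X P (phi X) b \<in> car P" using b fX fP by (intro tr_car) (auto simp: P_def)
    show "tr X P (phi X) d \<in> car P" using d fX fP by (intro tr_car) (auto simp: P_def)
    show "\<forall>p\<in>P. \<exists>x\<in>X. c' p = mult1 A (c x) v" using c'v by (auto simp: P_def)
  qed (rule eq)
qed

lemma one_f_idm1: "one_f A {1} (idm {1}) = vat 1 one"
  by (auto simp: fun_eq_iff vat_def one_f_idm) (simp add: one_f_def)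

lemma E1: assumes b: "b \<in> car {1}" and q: "q \<in> car {1}" shows "E {1} b (\<lambda>_. q) one = mult1 A b q"
proof -
  have cv: "cvec A {1} (\<lambda>_. q) = vat 1 q"
    using tr_id[of "{1}" q] q by (auto simp: cvec_def vat_def fun_eq_iff idm_sing)
  have m: "mlt {1} {1} (idm {1}) b (vat 1 q) \<in> car {1}" using mlt_car[of "{1}" "{1}" "idm {1}" b "vat 1 q"] b q
    by (simp add: Af_vat)
  show ?thesis unfolding E_def cv cmap_1 using unit_tr_ctr[of "{1}" "{1}" "idm {1}", OF _ _ _ m] tr_id[OF _ m]
    by (simp add: one_f_idm1 vec1_vat mult1_def)
qed

lemma hI_sub: "h_ideal A I \<Longrightarrow> I \<subseteq> car {1}" by (simp add: h_ideal_def)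
lemma hI_E: "h_ideal A I \<Longrightarrow> finite X \<Longrightarrow> b \<in> car X \<Longrightarrow> d \<in> car X \<Longrightarrow> \<forall>x\<in>X. c x \<in> I \<Longrightarrow> E X b c d \<in> I"
  unfolding h_ideal_def E_def by blast
lemma hI_intro: "I \<subseteq> car {1} \<Longrightarrow> (\<And>X b d c. finite X \<Longrightarrow> b \<in> car X \<Longrightarrow> d \<in> car X \<Longrightarrow> \<forall>x\<in>X. c x \<in> I \<Longrightarrow> E X b c d \<in> I)
   \<Longrightarrow> h_ideal A I"
  unfolding h_ideal_def E_def by blast

lemma absorb: assumes I: "h_ideal A I" and q: "q \<in> I" and v: "v \<in> car {1}" shows "mult1 A v q \<in> I"
proof -
  have "E {1} v (\<lambda>_. q) one \<in> I" using hI_E[OF I, of "{1}" v one "\<lambda>_. q"] q v one_car by simp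
  thus ?thesis using E1[OF v] hI_sub[OF I] q by auto
qed

lemma colon: assumes Q: "h_ideal A Q" and v: "v \<in> car {1}" shows "h_ideal A {u \<in> car {1}. mult1 A u v \<in> Q}"
proof (rule hI_intro)
  fix X b d c assume fX: "finite X" and b: "b \<in> car X" and d: "d \<in> car X" and c: "\<forall>x\<in>X. c x \<in> {u \<in> car {1}. mult1 A u v \<in> Q}"
  have c1: "\<forall>x\<in>X. c x \<in> car {1}" using c by auto
  obtain P b' c' d' where P: "finite P" "b' \<in> car P" "d' \<in> car P" "\<forall>p\<in>P. \<exists>x\<in>X. c' p = mult1 A (c x) v"
    and eq: "mult1 A (E X b c d) v = E P b' c' d'" using KEY[OF fX b d c1 v] by blast
  have "\<forall>p\<in>P. c' p \<in> Q" using P(4) c by fastforce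
  hence "E P b' c' d' \<in> Q" using hI_E[OF Q P(1-3)] by blast
  thus "E X b c d \<in> {u \<in> car {1}. mult1 A u v \<in> Q}" using eq E_car[OF fX b d c1] by simp
qed auto

lemma car1_ideal: "h_ideal A (car {1})"
  by (rule hI_intro) (auto intro: E_car)

definition gen where "gen S = \<Inter>{I. h_ideal A I \<and> S \<subseteq> I}"

lemma gen_ideal: "S \<subseteq> car {1} \<Longrightarrow> h_ideal A (gen S)"
proof -
  assume S: "S \<subseteq> car {1}"
  show ?thesis
  proof (rule hI_intro)
    show "gen S \<subseteq> car {1}" unfolding gen_def using car1_ideal S by blast
    fix X b d c assume "finite X" "b \<in> car X" "d \<in> car X" "\<forall>x\<in>X. c x \<in> gen S"
    thus "E X b c d \<in> gen S" unfolding gen_def using hI_E by blast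
  qed
qed
lemma gen_sup: "S \<subseteq> gen S" unfolding gen_def by blast
lemma gen_least: "h_ideal A J \<Longrightarrow> S \<subseteq> J \<Longrightarrow> gen S \<subseteq> J" unfolding gen_def by blast
lemma gen_mono: "S \<subseteq> S' \<Longrightarrow> gen S \<subseteq> gen S'" unfolding gen_def by blast

lemma chain_pick: assumes ch: "chain\<^sub>\<subseteq> C" and ne: "C \<noteq> {}" and fX: "finite X" and c: "\<forall>x\<in>X. c x \<in> \<Union>C"
  shows "\<exists>I\<in>C. \<forall>x\<in>X. c x \<in> I"
  using fX c
proof (induction X rule: finite_induct)
  case empty thus ?case using ne by auto
next
  case (insert x F)
  then obtain I1 where I1: "I1 \<in> C" "\<forall>y\<in>F. c y \<in> I1" by auto
  obtain I2 where I2: "I2 \<in> C" "c x \<in> I2" using insert.prems by auto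
  from ch I1(1) I2(1) have "I1 \<subseteq> I2 \<or> I2 \<subseteq> I1" by (auto simp: chain_subset_def)
  thus ?case using I1 I2 by blast
qed

lemma chain_ideal: assumes ch: "chain\<^sub>\<subseteq> C" and ne: "C \<noteq> {}" and I: "\<forall>I\<in>C. h_ideal A I"
  shows "h_ideal A (\<Union>C)"
proof (rule hI_intro)
  show "\<Union>C \<subseteq> car {1}" using I hI_sub by blast
  fix X b d c assume "finite X" "b \<in> car X" "d \<in> car X" "\<forall>x\<in>X. c x \<in> \<Union>C"
  moreover then obtain J where "J \<in> C" "\<forall>x\<in>X. c x \<in> J" using chain_pick[OF ch ne] by blast
  ultimately show "E X b c d \<in> \<Union>C" using I hI_E by blast
qed

definition pw where "pw a n = ((mult1 A a) ^^ n) one"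
lemma pw_0[simp]: "pw a 0 = one" by (simp add: pw_def)
lemma pw_Suc: "pw a (Suc n) = mult1 A a (pw a n)" by (simp add: pw_def)
lemma mult1_car: "x \<in> car {1} \<Longrightarrow> y \<in> car {1} \<Longrightarrow> mult1 A x y \<in> car {1}"
  unfolding mult1_def using mlt_car[of "{1}" "{1}" "idm {1}" x "vec1 y"] by (simp add: vec1_vat Af_vat)
lemma pw_car: "a \<in> car {1} \<Longrightarrow> pw a n \<in> car {1}"
  by (induction n) (auto simp: pw_Suc one_car mult1_car)
lemma pw_add: "a \<in> car {1} \<Longrightarrow> mult1 A (pw a m) (pw a n) = pw a (m + n)"
  by (induction m) (auto simp: pw_Suc m_one pw_car m_assoc)
lemma pw_1: "a \<in> car {1} \<Longrightarrow> pw a 1 = a"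
  using pw_Suc[of a 0] m_comm[of a one] m_one[of a] one_car by (simp add: One_nat_def)
lemma pw_prime: "is_prime A P \<Longrightarrow> a \<in> car {1} \<Longrightarrow> pw a n \<in> P \<Longrightarrow> a \<in> P"
proof (induction n)
  case 0 thus ?case by (simp add: is_prime_def)
next
  case (Suc n) thus ?case using pw_car[OF Suc.prems(2), of n] unfolding is_prime_def pw_Suc by blast
qed

lemma main: assumes a: "a \<in> car {1}" and opn: "\<forall>U\<in>\<U>. zar_open A U" and cov: "basicD A a \<subseteq> \<Union>\<U>"
  shows "\<exists>\<V>\<subseteq>\<U>. finite \<V> \<and> basicD A a \<subseteq> \<Union>\<V>"
proof -
  define Iof where "Iof U = (SOME I. I \<subseteq> car {1} \<and> U = spec A - zarV A I)" for U
  have Iof: "Iof U \<subseteq> car {1} \<and> U = spec A - zarV A (Iof U)" if "U \<in> \<U>" for U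
    unfolding Iof_def by (rule someI_ex) (use opn that in \<open>auto simp: zar_open_def\<close>)
  define T where "T = \<Union>(Iof ` \<U>)"
  have T1: "T \<subseteq> car {1}" using Iof by (auto simp: T_def)
  have "\<exists>n. pw a n \<in> gen T"
  proof (rule ccontr)
    assume nn: "\<not> (\<exists>n. pw a n \<in> gen T)"
    define \<A> where "\<A> = {I. h_ideal A I \<and> T \<subseteq> I \<and> (\<forall>n. pw a n \<notin> I)}"
    have gT: "gen T \<in> \<A>" using nn gen_ideal[OF T1] gen_sup by (auto simp: \<A>_def)
    have "\<forall>C\<in>chains \<A>. \<exists>U\<in>\<A>. \<forall>X\<in>C. X \<subseteq> U"
    proof
      fix C assume C: "C \<in> chains \<A>"
      show "\<exists>U\<in>\<A>. \<forall>X\<in>C. X \<subseteq> U"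
      proof (cases "C = {}")
        case True thus ?thesis using gT by auto
      next
        case False
        have ch: "chain\<^sub>\<subseteq> C" and CA: "C \<subseteq> \<A>" using C by (auto simp: chains_def)
        have "\<Union>C \<in> \<A>" unfolding \<A>_def
          using chain_ideal[OF ch False] CA False by (auto simp: \<A>_def)
        thus ?thesis by blast
      qed
    qed
    then obtain M where M: "M \<in> \<A>" and Mmax: "\<forall>X\<in>\<A>. M \<subseteq> X \<longrightarrow> X = M" using Zorn_Lemma2 by blast
    have MI: "h_ideal A M" and TM: "T \<subseteq> M" and Mpw: "\<forall>n. pw a n \<notin> M" using M by (auto simp: \<A>_def)
    have M1: "M \<subseteq> car {1}" using hI_sub[OF MI] .
    have ext: "\<exists>n. pw a n \<in> gen (M \<union> {x})" if x: "x \<in> car {1}" "x \<notin> M" for x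
    proof (rule ccontr)
      assume "\<not> ?thesis"
      hence "gen (M \<union> {x}) \<in> \<A>" using gen_ideal[of "M \<union> {x}"] M1 x TM gen_sup[of "M \<union> {x}"]
        by (auto simp: \<A>_def)
      moreover have "M \<subseteq> gen (M \<union> {x})" using gen_sup by blast
      ultimately have "gen (M \<union> {x}) = M" using Mmax by blast
      thus False using gen_sup[of "M \<union> {x}"] x by blast
    qed
    have colM: "gen (M \<union> {x}) \<subseteq> {u \<in> car {1}. mult1 A u y \<in> M}"
      if x: "x \<in> car {1}" and y: "y \<in> car {1}" and xy: "mult1 A x y \<in> M" for x y
    proof (rule gen_least[OF colon[OF MI y]])
      show "M \<union> {x} \<subseteq> {u \<in> car {1}. mult1 A u y \<in> M}"
      proof
        fix u assume "u \<in> M \<union> {x}"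
        thus "u \<in> {u \<in> car {1}. mult1 A u y \<in> M}"
        proof
          assume u: "u \<in> M"
          hence "mult1 A y u \<in> M" using absorb[OF MI u y] by simp
          thus ?thesis using u M1 m_comm[of u y] y by auto
        qed (use x xy in auto)
      qed
    qed
    have prime: "is_prime A M"
      unfolding is_prime_def
    proof (intro conjI ballI impI)
      show "h_ideal A M" by (rule MI)
      show "one \<notin> M" using Mpw pw_0 by metis
      fix x y assume x: "x \<in> car {1}" and y: "y \<in> car {1}" and xy: "mult1 A x y \<in> M"
      show "x \<in> M \<or> y \<in> M"
      proof (rule ccontr)
        assume "\<not> (x \<in> M \<or> y \<in> M)"
        then obtain n m where n: "pw a n \<in> gen (M \<union> {x})" and m: "pw a m \<in> gen (M \<union> {y})"
          using ext x y by blast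
        have s: "mult1 A (pw a n) y \<in> M" using colM[OF x y xy] n by blast
        have "mult1 A y (pw a n) \<in> M" using s m_comm[OF y pw_car[OF a]] by simp
        hence "mult1 A (pw a m) (pw a n) \<in> M" using colM[OF y pw_car[OF a]] m by blast
        thus False using pw_add[OF a] Mpw by simp
      qed
    qed
    have "a \<notin> M" using Mpw pw_1[OF a] by metis
    hence "M \<in> basicD A a" using prime by (simp add: basicD_def spec_def)
    then obtain U where U: "U \<in> \<U>" "M \<in> U" using cov by blast
    hence "\<not> Iof U \<subseteq> M" using Iof[OF U(1)] by (auto simp: zarV_def)
    moreover have "Iof U \<subseteq> M" using TM U(1) by (auto simp: T_def)
    ultimately show False by blast
  qed
  then obtain n where n: "pw a n \<in> gen T" by blast
  define S where "S = {u. \<exists>\<V>\<subseteq>\<U>. finite \<V> \<and> u \<in> gen (\<Union>(Iof ` \<V>))}"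
  have sub: "\<V> \<subseteq> \<U> \<Longrightarrow> \<Union>(Iof ` \<V>) \<subseteq> car {1}" for \<V> using Iof by blast
  have SI: "h_ideal A S"
  proof (rule hI_intro)
    show "S \<subseteq> car {1}" unfolding S_def using gen_ideal[OF sub] hI_sub by blast
    fix X b d c assume fX: "finite X" and b: "b \<in> car X" and d: "d \<in> car X" and c: "\<forall>x\<in>X. c x \<in> S"
    then obtain F where F: "\<forall>x\<in>X. F x \<subseteq> \<U> \<and> finite (F x) \<and> c x \<in> gen (\<Union>(Iof ` F x))"
      unfolding S_def using bchoice[of X "\<lambda>x V. V \<subseteq> \<U> \<and> finite V \<and> c x \<in> gen (\<Union>(Iof ` V))"] by blast
    define V where "V = \<Union>(F ` X)"
    have V: "V \<subseteq> \<U>" "finite V" using F fX by (auto simp: V_def)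
    have "\<forall>x\<in>X. c x \<in> gen (\<Union>(Iof ` V))"
    proof
      fix x assume x: "x \<in> X"
      have "gen (\<Union>(Iof ` F x)) \<subseteq> gen (\<Union>(Iof ` V))" by (rule gen_mono) (use x in \<open>auto simp: V_def\<close>)
      thus "c x \<in> gen (\<Union>(Iof ` V))" using F x by blast
    qed
    hence "E X b c d \<in> gen (\<Union>(Iof ` V))" using hI_E[OF gen_ideal[OF sub[OF V(1)]] fX b d] by blast
    thus "E X b c d \<in> S" unfolding S_def using V by blast
  qed
  have "T \<subseteq> S"
  proof
    fix t assume "t \<in> T"
    then obtain U where U: "U \<in> \<U>" "t \<in> Iof U" by (auto simp: T_def)
    hence "t \<in> gen (\<Union>(Iof ` {U}))" using gen_sup by fastforce
    thus "t \<in> S" unfolding S_def using U by (intro CollectI exI[of _ "{U}"]) auto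
  qed
  hence "pw a n \<in> S" using gen_least[OF SI] n by blast
  then obtain V where V: "V \<subseteq> \<U>" "finite V" and nV: "pw a n \<in> gen (\<Union>(Iof ` V))" by (auto simp: S_def)
  have "basicD A a \<subseteq> \<Union>V"
  proof
    fix P assume P: "P \<in> basicD A a"
    show "P \<in> \<Union>V"
    proof (rule ccontr)
      assume "P \<notin> \<Union>V"
      have "\<forall>U\<in>V. Iof U \<subseteq> P"
      proof
        fix U assume U: "U \<in> V"
        hence "U = spec A - zarV A (Iof U)" using Iof V(1) by blast
        moreover have "P \<notin> U" using U \<open>P \<notin> \<Union>V\<close> by blast
        moreover have "P \<in> spec A" using P by (simp add: basicD_def)
        ultimately show "Iof U \<subseteq> P" by (auto simp: zarV_def)
      qed
      hence "\<Union>(Iof ` V) \<subseteq> P" by blast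
      moreover have "h_ideal A P" using P by (simp add: basicD_def spec_def is_prime_def)
      ultimately have "pw a n \<in> P" using gen_least nV by blast
      moreover have "is_prime A P" using P by (simp add: basicD_def spec_def)
      ultimately have "a \<in> P" using pw_prime[OF _ a] by blast
      thus False using P by (simp add: basicD_def)
    qed
  qed
  thus ?thesis using V by blast
qed

end

theorem proposition4p3p9:
  fixes A :: "'e gring" and a :: 'e
  assumes "generalized_ring A" and "a \<in> gr_car A {1}"
  shows "zar_compact A (basicD A a) \<and> spec A = basicD A (gr_one A) \<and> zar_compact A (spec A)"
proof -
  interpret GR A by (rule GR.intro) (rule assms(1))
  have sp: "spec A = basicD A (gr_one A)" by (auto simp: spec_def basicD_def is_prime_def)
  have "zar_compact A (basicD A b)" if "b \<in> gr_car A {1}" for b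
    unfolding zar_compact_def using main[OF that] by blast
  thus ?thesis using sp assms(2) one_car by metis
qed

end
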